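(* Let $A\in GL(4,\mathbb{R})$ satisfy condition (E) (defined in the context). \begin{enumerate} \item If the matrix $A^2$ also satisfies condition (E), then $(\det A)^2=1$. \item If $(\det A)^2=1$, then there exists $k\in S^1$ such that $A$ is $k$-congruent; moreover, either such a $k$ is unique, or $A$ is $k$-congruent for every $k\in S^1$. \end{enumerate} Furthermore, let $A_1,A_2\in GL(4,\mathbb{R})$ be $k_1$-congruent and $k_2$-congruent respectively, with $k_1,k_2\in S^1$, and suppose $k_1$ is uniquely determined (i.e. $A_1$ is $k$-congruent only for $k=k_1$). If $A_1A_2$ (resp. $A_2A_1$) is $k$-congruent for some $k\in S^1$, then $A_1A_2$ (resp. $A_2A_1$) is $k_1$-congruent.
   Context: For $A\in GL(4,\mathbb{R})$ write in block form $A=\begin{pmatrix} a_{00} & \mathbf{a_h}\\ \mathbf{a_v}^t & \hat A\end{pmatrix}$, $A^{-1}=\begin{pmatrix} \tilde a_{00} & \mathbf{\tilde a_h}\\ \mathbf{\tilde a_v}^t & \tilde A\end{pmatrix}$, with $a_{00},\tilde a_{00}\in\mathbb{R}$, $\mathbf{a_h},\mathbf{a_v},\mathbf{\tilde a_h},\mathbf{\tilde a_v}\in\mathbb{R}^3$ (row vectors) and $\hat A,\tilde A$ $3\times3$ matrices. Condition (E) on $A$ means: $\tilde a_{00}=a_{00}$ and $\tilde A=\hat A^t$. Let $S^1=\mathbb{R}\cup\{\omega\}$ (the extended real line with $+\infty$ and $-\infty$ identified to one point $\omega$). For $k\in\mathbb{R}$ let $I^{(k)}=\mathrm{diag}(k,1,1,1)$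 and $O^{(k)}(4,\mathbb{R})=\{A\in GL(4,\mathbb{R}) : (\det A)^2=1,\ A^tI^{(k)}A=I^{(k)}\}$; and $O^{(\omega)}(4,\mathbb{R})=\{A\in GL(4,\mathbb{R}) : A^t\in O^{(0)}(4,\mathbb{R})\}$. A matrix $A$ is called $k$-congruent if $A\in O^{(k)}(4,\mathbb{R})$. *)

theory Defs
  imports "HOL-Analysis.Analysis"
begin

text \<open>4x4 real matrices indexed by the numeral type 4 = {0,1,2,3}; index 0 is the
  distinguished first row/column.\<close>
type_synonym mat4 = "real^4^4"

definition condE :: "mat4 \<Rightarrow> bool" where
  "condE A \<longleftrightarrow> matrix_inv A $ 0 $ 0 = A $ 0 $ 0 \<and>
     (\<forall>i j::4. i \<noteq> 0 \<longrightarrow> j \<noteq> 0 \<longrightarrow> matrix_inv A $ i $ j = A $ j $ i)"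

text \<open>The circle S^1 = R \<union> {\<omega>}.\<close>
datatype S1 = Fin real | Omega

definition Ik :: "real \<Rightarrow> mat4" where
  "Ik k = (\<chi> i j. if i = j then (if i = 0 then k else 1) else 0)"

definition Ok :: "real \<Rightarrow> mat4 set" where
  "Ok k = {A. invertible A \<and> (det A)^2 = 1 \<and> transpose A ** Ik k ** A = Ik k}"

definition Oext :: "S1 \<Rightarrow> mat4 set" where
  "Oext k = (case k of Fin r \<Rightarrow> Ok r | Omega \<Rightarrow> {A. invertible A \<and> transpose A \<in> Ok 0})"

definition kcong :: "S1 \<Rightarrow> mat4 \<Rightarrow> bool" where
  "kcong k A \<longleftrightarrow> A \<in> Oext k"

end

theory Submission
  imports Defs
begin

lemma UNIV_4': "(UNIV::4 set) = {0,1,2,3}"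
proof -
  have "(4::4) = 0" by simp
  then show ?thesis using UNIV_4 by auto
qed

lemma sum4: "sum f (UNIV::4 set) = f 0 + f 1 + f 2 + f 3"
  unfolding UNIV_4' by (simp add: ac_simps)

lemma prod4: "prod f (UNIV::4 set) = f 0 * f 1 * f 2 * f 3"
  unfolding UNIV_4' by (simp add: ac_simps)

lemma det_4:
  "det (A::real^4^4) =
    A$0$0 * (A$1$1 * A$2$2 * A$3$3 + A$1$2 * A$2$3 * A$3$1 + A$1$3 * A$2$1 * A$3$2
           - A$1$1 * A$2$3 * A$3$2 - A$1$2 * A$2$1 * A$3$3 - A$1$3 * A$2$2 * A$3$1)
  - A$0$1 * (A$1$0 * A$2$2 * A$3$3 + A$1$2 * A$2$3 * A$3$0 + A$1$3 * A$2$0 * A$3$2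
           - A$1$0 * A$2$3 * A$3$2 - A$1$2 * A$2$0 * A$3$3 - A$1$3 * A$2$2 * A$3$0)
  + A$0$2 * (A$1$0 * A$2$1 * A$3$3 + A$1$1 * A$2$3 * A$3$0 + A$1$3 * A$2$0 * A$3$1
           - A$1$0 * A$2$3 * A$3$1 - A$1$1 * A$2$0 * A$3$3 - A$1$3 * A$2$1 * A$3$0)
  - A$0$3 * (A$1$0 * A$2$1 * A$3$2 + A$1$1 * A$2$2 * A$3$0 + A$1$2 * A$2$0 * A$3$1
           - A$1$0 * A$2$2 * A$3$1 - A$1$1 * A$2$0 * A$3$2 - A$1$2 * A$2$1 * A$3$0)"
proof -
  have f1: "finite {1::4, 2, 3}" "0 \<notin> {1::4, 2, 3}" by auto
  have f2: "finite {2::4, 3}" "1 \<notin> {2::4, 3}" by auto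
  have f3: "finite {3::4}" "2 \<notin> {3::4}" by auto
  show ?thesis
    unfolding det_def UNIV_4'
    unfolding sum_over_permutations_insert[OF f1]
    unfolding sum_over_permutations_insert[OF f2]
    unfolding sum_over_permutations_insert[OF f3]
    unfolding permutes_sing
    by (simp add: sign_swap_id permutation_swap_id permutation_compose sign_compose sign_id swap_id_eq algebra_simps)
qed

lemma ex4: "(i::4) = 0 \<or> i = 1 \<or> i = 2 \<or> i = 3"
  using UNIV_4' by auto

definition S3 :: "4 set" where "S3 = {1,2,3}"

lemma sumS: "sum f S3 = f 1 + f 2 + f 3"
  by (simp add: S3_def ac_simps)

lemma S3_iff: "(i \<in> S3) = (i \<noteq> 0)"
  using ex4[of i] by (auto simp: S3_def)

lemma mult_entry: "((X::real^4^4) ** Y)$i$j = X$i$0*Y$0$j + (\<Sum>m\<in>S3. X$i$m*Y$m$j)"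
  by (simp add: matrix_matrix_mult_def sum4 sumS)

lemma Ik_entry: "Ik k $ i $ j = (if i = j then (if i = 0 then k else 1) else 0)"
  by (simp add: Ik_def)

lemma quad_entry: "(transpose Z ** Ik k ** Z)$i$j = k*Z$0$i*Z$0$j + (\<Sum>m\<in>S3. Z$m$i*Z$m$j)"
  by (simp add: matrix_matrix_mult_def sum4 sumS Ik_def transpose_def)

lemma quadT_entry: "(Z ** Ik k ** transpose Z)$i$j = k*Z$i$0*Z$j$0 + (\<Sum>m\<in>S3. Z$i$m*Z$j$m)"
  by (simp add: matrix_matrix_mult_def sum4 sumS Ik_def transpose_def)

lemma det_Ik: "det (Ik k) = k"
  by (subst det_diagonal) (auto simp: Ik_def prod4)

definition emb :: "3 \<Rightarrow> 4" where "emb i = (if i = 1 then 1 else if i = 2 then 2 else 3)"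

lemma emb_simps[simp]: "emb 1 = 1" "emb 2 = 2" "emb 3 = 3"
  by (simp_all add: emb_def)

definition minor :: "real^4^4 \<Rightarrow> real^3^3" where "minor A = (\<chi> i j. A $ emb i $ emb j)"

lemma det_minor: "det (minor A) =
    A$1$1 * A$2$2 * A$3$3 + A$1$2 * A$2$3 * A$3$1 + A$1$3 * A$2$1 * A$3$2
           - A$1$1 * A$2$3 * A$3$2 - A$1$2 * A$2$1 * A$3$3 - A$1$3 * A$2$2 * A$3$1"
  by (simp add: det_3 minor_def)

lemma det_row0:
  assumes "A$0$1 = 0" "A$0$2 = 0" "A$0$3 = 0"
  shows "det (A::real^4^4) = A$0$0 * det (minor A)"
  using assms by (simp add: det_4 det_minor)

lemma det_col0:
  assumes "A$1$0 = 0" "A$2$0 = 0" "A$3$0 = 0"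
  shows "det (A::real^4^4) = A$0$0 * det (minor A)"
  using assms by (simp add: det_4 det_minor algebra_simps)

lemma ex3: "(i::3) = 1 \<or> i = 2 \<or> i = 3"
  using exhaust_3 by auto

lemma minor_rows:
  fixes A :: mat4
  assumes "\<And>i j. i \<noteq> 0 \<Longrightarrow> j \<noteq> 0 \<Longrightarrow> (\<Sum>m\<in>S3. A$i$m*A$j$m) = (if i = j then 1 else (0::real))"
  shows "minor A ** transpose (minor A) = mat 1"
proof -
  have "(minor A ** transpose (minor A))$i$j = (if i = j then 1 else 0)" for i j
  proof -
    have e: "(minor A ** transpose (minor A))$i$j = (\<Sum>m\<in>S3. A$(emb i)$m*A$(emb j)$m)"
      by (simp add: matrix_matrix_mult_def sum_3 minor_def transpose_def sumS)
    have ne: "emb i \<noteq> 0" "emb j \<noteq> 0" by (auto simp: emb_def)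
    have inj: "(emb i = emb j) = (i = j)"
      using ex3[of i] ex3[of j] by auto
    show ?thesis unfolding e assms[OF ne] inj by simp
  qed
  then show ?thesis by (simp add: vec_eq_iff mat_def)
qed

lemma minor_cols:
  fixes A :: mat4
  assumes "\<And>i j. i \<noteq> 0 \<Longrightarrow> j \<noteq> 0 \<Longrightarrow> (\<Sum>m\<in>S3. A$m$i*A$m$j) = (if i = j then 1 else (0::real))"
  shows "transpose (minor A) ** minor A = mat 1"
proof -
  have "(transpose (minor A) ** minor A)$i$j = (if i = j then 1 else 0)" for i j
  proof -
    have e: "(transpose (minor A) ** minor A)$i$j = (\<Sum>m\<in>S3. A$m$(emb i)*A$m$(emb j))"
      by (simp add: matrix_matrix_mult_def sum_3 minor_def transpose_def sumS)
    have ne: "emb i \<noteq> 0" "emb j \<noteq> 0" by (auto simp: emb_def)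
    have inj: "(emb i = emb j) = (i = j)"
      using ex3[of i] ex3[of j] by auto
    show ?thesis unfolding e assms[OF ne] inj by simp
  qed
  then show ?thesis by (simp add: vec_eq_iff mat_def)
qed

lemma minor_rows_rev:
  fixes A :: mat4
  assumes "minor A ** transpose (minor A) = mat 1" "i \<noteq> 0" "j \<noteq> 0"
  shows "(\<Sum>m\<in>S3. A$i$m*A$j$m) = (if i = j then 1 else (0::real))"
proof -
  obtain i' where i': "emb i' = i" using ex4[of i] assms(2) by (metis emb_simps)
  obtain j' where j': "emb j' = j" using ex4[of j] assms(3) by (metis emb_simps)
  have "(minor A ** transpose (minor A))$i'$j' = (\<Sum>m\<in>S3. A$(emb i')$m*A$(emb j')$m)"
    by (simp add: matrix_matrix_mult_def sum_3 minor_def transpose_def sumS)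
  moreover have "(i' = j') = (i = j)" using i' j' ex3[of i'] ex3[of j'] by auto
  ultimately show ?thesis using assms(1) i' j' by (simp add: mat_def)
qed

lemma minor_cols_rev:
  fixes A :: mat4
  assumes "transpose (minor A) ** minor A = mat 1" "i \<noteq> 0" "j \<noteq> 0"
  shows "(\<Sum>m\<in>S3. A$m$i*A$m$j) = (if i = j then 1 else (0::real))"
proof -
  obtain i' where i': "emb i' = i" using ex4[of i] assms(2) by (metis emb_simps)
  obtain j' where j': "emb j' = j" using ex4[of j] assms(3) by (metis emb_simps)
  have "(transpose (minor A) ** minor A)$i'$j' = (\<Sum>m\<in>S3. A$m$(emb i')*A$m$(emb j'))"
    by (simp add: matrix_matrix_mult_def sum_3 minor_def transpose_def sumS)
  moreover have "(i' = j') = (i = j)" using i' j' ex3[of i'] ex3[of j'] by auto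
  ultimately show ?thesis using assms(1) i' j' by (simp add: mat_def)
qed

lemma transfer_cols_rows:
  fixes A :: mat4
  assumes "\<And>i j. i \<noteq> 0 \<Longrightarrow> j \<noteq> 0 \<Longrightarrow> (\<Sum>m\<in>S3. A$m$i*A$m$j) = (if i = j then 1 else (0::real))"
    "i \<noteq> 0" "j \<noteq> 0"
  shows "(\<Sum>m\<in>S3. A$i$m*A$j$m) = (if i = j then 1 else (0::real))"
proof -
  have "minor A ** transpose (minor A) = mat 1" using minor_cols[OF assms(1)] matrix_left_right_inverse by blast
  then show ?thesis using minor_rows_rev assms(2,3) by blast
qed

lemma transfer_rows_cols:
  fixes A :: mat4
  assumes "\<And>i j. i \<noteq> 0 \<Longrightarrow> j \<noteq> 0 \<Longrightarrow> (\<Sum>m\<in>S3. A$i$m*A$j$m) = (if i = j then 1 else (0::real))"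
    "i \<noteq> 0" "j \<noteq> 0"
  shows "(\<Sum>m\<in>S3. A$m$i*A$m$j) = (if i = j then 1 else (0::real))"
proof -
  have "transpose (minor A) ** minor A = mat 1" using minor_rows[OF assms(1)] matrix_left_right_inverse by blast
  then show ?thesis using minor_cols_rev assms(2,3) by blast
qed

lemma det_minor_sq:
  fixes A :: mat4
  assumes "minor A ** transpose (minor A) = mat 1"
  shows "det (minor A)^2 = 1"
proof -
  have "det (minor A ** transpose (minor A)) = 1" using assms by simp
  then show ?thesis by (simp add: det_mul power2_eq_square)
qed

lemma inv_facts:
  fixes A :: mat4
  assumes "invertible A"
  shows "A ** matrix_inv A = mat 1" "matrix_inv A ** A = mat 1"
proof -
  have "\<exists>A'. A ** A' = mat 1 \<and> A' ** A = mat 1" using assms unfolding invertible_def by blast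
  then have "A ** matrix_inv A = mat 1 \<and> matrix_inv A ** A = mat 1"
    unfolding matrix_inv_def by (rule someI_ex)
  then show "A ** matrix_inv A = mat 1" "matrix_inv A ** A = mat 1" by auto
qed

lemma inv_unique:
  fixes A B :: mat4
  assumes "B ** A = mat 1"
  shows "matrix_inv A = B" "invertible A"
proof -
  show inv: "invertible A" using assms invertible_left_inverse by blast
  have "B = B ** (A ** matrix_inv A)" using inv_facts[OF inv] by simp
  also have "\<dots> = matrix_inv A" by (simp add: matrix_mul_assoc assms)
  finally show "matrix_inv A = B" by simp
qed

lemma kcong_Fin: "kcong (Fin k) A \<longleftrightarrow> invertible A \<and> det A^2 = 1 \<and> transpose A ** Ik k ** A = Ik k"
  by (simp add: kcong_def Oext_def Ok_def)

lemma invertible_transpose_iff: "invertible (transpose (A::mat4)) \<longleftrightarrow> invertible A"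
  using transpose_invertible transpose_transpose by metis

lemma kcong_Omega: "kcong Omega A \<longleftrightarrow> invertible A \<and> det A^2 = 1 \<and> A ** Ik 0 ** transpose A = Ik 0"
  by (auto simp: kcong_def Oext_def Ok_def invertible_transpose_iff)

lemma kcong_inv: "kcong k A \<Longrightarrow> invertible A"
  by (cases k) (auto simp: kcong_Fin kcong_Omega)

lemma kcong_det: "kcong k A \<Longrightarrow> det A^2 = 1"
  by (cases k) (auto simp: kcong_Fin kcong_Omega)

definition inH :: "mat4 \<Rightarrow> bool" where
  "inH Z \<longleftrightarrow> (\<forall>j. j \<noteq> 0 \<longrightarrow> Z$0$j = 0 \<and> Z$j$0 = 0) \<and> (Z$0$0)^2 = 1 \<and>
     (\<forall>i j. i \<noteq> 0 \<longrightarrow> j \<noteq> 0 \<longrightarrow> (\<Sum>m\<in>S3. Z$m$i*Z$m$j) = (if i = j then 1 else 0))"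

lemma sum_col0_zero:
  fixes Z :: mat4
  assumes "\<And>j. j \<noteq> 0 \<Longrightarrow> Z$j$0 = 0"
  shows "(\<Sum>m\<in>S3. Z$m$0*Z$m$j) = 0" "(\<Sum>m\<in>S3. Z$m$j*Z$m$0) = 0"
  using assms[of 1] assms[of 2] assms[of 3] by (simp_all add: sumS)

lemma sum_row0_zero:
  fixes Z :: mat4
  assumes "\<And>j. j \<noteq> 0 \<Longrightarrow> Z$0$j = 0"
  shows "(\<Sum>m\<in>S3. Z$0$m*Z$j$m) = 0" "(\<Sum>m\<in>S3. Z$j$m*Z$0$m) = 0"
  using assms[of 1] assms[of 2] assms[of 3] by (simp_all add: sumS)

lemma inH_quad:
  assumes "inH Z"
  shows "transpose Z ** Ik k ** Z = Ik k"
proof -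
  have z: "\<And>j. j \<noteq> 0 \<Longrightarrow> Z$0$j = 0" "\<And>j. j \<noteq> 0 \<Longrightarrow> Z$j$0 = 0" "(Z$0$0)^2 = 1"
    and o: "\<And>i j. i \<noteq> 0 \<Longrightarrow> j \<noteq> 0 \<Longrightarrow> (\<Sum>m\<in>S3. Z$m$i*Z$m$j) = (if i = j then 1 else 0)"
    using assms unfolding inH_def by auto
  have "(transpose Z ** Ik k ** Z)$i$j = Ik k $i$j" for i j
  proof (cases "i = 0")
    case True
    then show ?thesis
      using sum_col0_zero[OF z(2)] z(1,3) by (cases "j = 0") (auto simp: quad_entry Ik_entry power2_eq_square)
  next
    case False
    then show ?thesis
      using sum_col0_zero[OF z(2)] z(1) o by (cases "j = 0") (auto simp: quad_entry Ik_entry)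
  qed
  then show ?thesis by (simp add: vec_eq_iff)
qed

lemma inH_det: "inH Z \<Longrightarrow> det Z^2 = 1"
proof -
  assume h: "inH Z"
  then have "Z$0$1 = 0" "Z$0$2 = 0" "Z$0$3 = 0" "(Z$0$0)^2 = 1" unfolding inH_def by auto
  then have d: "det Z = Z$0$0 * det (minor Z)" by (simp add: det_row0)
  have "transpose (minor Z) ** minor Z = mat 1" using h unfolding inH_def by (intro minor_cols) auto
  then have "minor Z ** transpose (minor Z) = mat 1" using matrix_left_right_inverse by blast
  then have "det (minor Z)^2 = 1" by (rule det_minor_sq)
  then show ?thesis using d \<open>(Z$0$0)^2 = 1\<close> by (simp add: power_mult_distrib)
qed

lemma inH_transpose:
  assumes "inH Z" shows "inH (transpose Z)"
proof -
  have o: "\<And>i j. i\<noteq>0 \<Longrightarrow> j\<noteq>0 \<Longrightarrow> (\<Sum>m\<in>S3. Z$m$i*Z$m$j) = (if i=j then 1 else 0)"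
    using assms unfolding inH_def by auto
  have o2: "\<And>i j. i\<noteq>0 \<Longrightarrow> j\<noteq>0 \<Longrightarrow> (\<Sum>m\<in>S3. Z$i$m*Z$j$m) = (if i=j then 1 else 0)"
    using transfer_cols_rows[OF o] by blast
  show ?thesis using assms o2 unfolding inH_def by (simp add: transpose_def)
qed

lemma inH_all: "inH Z \<Longrightarrow> kcong k Z"
proof -
  assume h: "inH Z"
  have d: "det Z^2 = 1" by (rule inH_det[OF h])
  then have inv: "invertible Z" by (auto simp: invertible_det_nz)
  show ?thesis
  proof (cases k)
    case (Fin r)
    then show ?thesis using inv d inH_quad[OF h] by (simp add: kcong_Fin)
  next
    case Omega
    have "transpose (transpose Z) ** Ik 0 ** transpose Z = Ik 0"
      by (rule inH_quad[OF inH_transpose[OF h]])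
    then show ?thesis using Omega inv d by (simp add: kcong_Omega)
  qed
qed

lemma col0_from_orth:
  fixes Z :: mat4
  assumes o: "\<And>i j. i \<noteq> 0 \<Longrightarrow> j \<noteq> 0 \<Longrightarrow> (\<Sum>m\<in>S3. Z$i$m*Z$j$m) = (if i = j then 1 else 0)"
    and c: "\<And>m. m \<noteq> 0 \<Longrightarrow> (\<Sum>j\<in>S3. Z$j$m*Z$j$0) = 0"
    and i: "i \<noteq> 0"
  shows "Z$i$0 = 0"
proof -
  have "Z$i$0 = (\<Sum>j\<in>S3. (if i = j then 1 else 0) * Z$j$0)"
    using i ex4[of i] by (auto simp: sumS)
  also have "\<dots> = (\<Sum>j\<in>S3. (\<Sum>m\<in>S3. Z$i$m*Z$j$m) * Z$j$0)"
    by (rule sum.cong) (auto simp: o i S3_iff)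
  also have "\<dots> = (\<Sum>m\<in>S3. Z$i$m * (\<Sum>j\<in>S3. Z$j$m*Z$j$0))"
    by (simp add: sumS algebra_simps)
  also have "\<dots> = 0"
    by (rule sum.neutral) (auto simp: c S3_iff)
  finally show ?thesis .
qed

lemma mk_inH:
  fixes Z :: mat4
  assumes r: "\<And>j. j \<noteq> 0 \<Longrightarrow> Z$0$j = 0"
    and o: "\<And>i j. i \<noteq> 0 \<Longrightarrow> j \<noteq> 0 \<Longrightarrow> (\<Sum>m\<in>S3. Z$m$i*Z$m$j) = (if i = j then 1 else 0)"
    and c: "\<And>j. j \<noteq> 0 \<Longrightarrow> (\<Sum>m\<in>S3. Z$m$0*Z$m$j) = 0"
    and d: "det Z^2 = 1"
  shows "inH Z"
proof -
  have o2: "(\<Sum>m\<in>S3. Z$i$m*Z$j$m) = (if i = j then 1 else 0)" if "i \<noteq> 0" "j \<noteq> 0" for i j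
    using transfer_cols_rows[OF o that] .
  have c2: "(\<Sum>j\<in>S3. Z$j$m*Z$j$0) = 0" if "m \<noteq> 0" for m
    using c[OF that] by (simp add: ac_simps)
  have z: "Z$i$0 = 0" if "i \<noteq> 0" for i
    by (rule col0_from_orth[OF o2 c2 that]) auto
  have d1: "det Z = Z$0$0 * det (minor Z)" using r by (simp add: det_row0)
  have "transpose (minor Z) ** minor Z = mat 1" by (intro minor_cols o)
  then have "minor Z ** transpose (minor Z) = mat 1" using matrix_left_right_inverse by blast
  then have "det (minor Z)^2 = 1" by (rule det_minor_sq)
  then have "(Z$0$0)^2 = 1" using d d1 by (simp add: power_mult_distrib)
  then show ?thesis unfolding inH_def using r z o by auto
qed

lemma sum_sq3_zero:
  fixes f :: "4 \<Rightarrow> real"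
  assumes "(\<Sum>m\<in>S3. f m * f m) = 0" "j \<noteq> 0"
  shows "f j = 0"
proof -
  have "f 1 * f 1 + f 2 * f 2 + f 3 * f 3 = 0" using assms(1) by (simp add: sumS)
  moreover have "f 1 * f 1 \<ge> 0" "f 2 * f 2 \<ge> 0" "f 3 * f 3 \<ge> 0" by auto
  ultimately have "f 1 = 0" "f 2 = 0" "f 3 = 0" by (smt (verit) mult_eq_0_iff)+
  then show ?thesis using ex4[of j] assms(2) by auto
qed

lemma two_classes_FF:
  assumes "kcong (Fin a) Z" "kcong (Fin b) Z" "a \<noteq> b"
  shows "inH Z"
proof -
  have qa: "a*Z$0$i*Z$0$j + (\<Sum>m\<in>S3. Z$m$i*Z$m$j) = Ik a $i$j" for i j
    using assms(1) unfolding kcong_Fin quad_entry[symmetric] by simp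
  have qb: "b*Z$0$i*Z$0$j + (\<Sum>m\<in>S3. Z$m$i*Z$m$j) = Ik b $i$j" for i j
    using assms(2) unfolding kcong_Fin quad_entry[symmetric] by simp
  have rr: "Z$0$i*Z$0$j = (if i = 0 \<and> j = 0 then 1 else 0)" for i j
  proof -
    have "(a-b)*(Z$0$i*Z$0$j) = Ik a $i$j - Ik b $i$j" using qa[of i j] qb[of i j] by (simp add: algebra_simps)
    also have "\<dots> = (a-b) * (if i = 0 \<and> j = 0 then 1 else 0)" by (simp add: Ik_entry)
    finally show ?thesis using assms(3) by simp
  qed
  have r: "Z$0$j = 0" if "j \<noteq> 0" for j using rr[of j j] that by simp
  show ?thesis
  proof (rule mk_inH[OF r])
    show "(\<Sum>m\<in>S3. Z$m$i*Z$m$j) = (if i = j then 1 else 0)" if "i \<noteq> 0" "j \<noteq> 0" for i j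
      using qa[of i j] r[OF that(1)] that by (simp add: Ik_entry)
    show "(\<Sum>m\<in>S3. Z$m$0*Z$m$j) = 0" if "j \<noteq> 0" for j
      using qa[of 0 j] r[OF that] that by (simp add: Ik_entry)
    show "det Z^2 = 1" using assms(1) by (rule kcong_det)
  qed auto
qed

lemma two_classes_FO:
  assumes "kcong (Fin a) Z" "kcong Omega Z"
  shows "inH Z"
proof -
  have qa: "a*Z$0$i*Z$0$j + (\<Sum>m\<in>S3. Z$m$i*Z$m$j) = Ik a $i$j" for i j
    using assms(1) unfolding kcong_Fin quad_entry[symmetric] by simp
  have qo: "0*Z$i$0*Z$j$0 + (\<Sum>m\<in>S3. Z$i$m*Z$j$m) = Ik 0 $i$j" for i j
    using assms(2) unfolding kcong_Omega quadT_entry[symmetric] by simp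
  have "(\<Sum>m\<in>S3. Z$0$m*Z$0$m) = 0" using qo[of 0 0] by (simp add: Ik_entry)
  then have r: "Z$0$j = 0" if "j \<noteq> 0" for j using sum_sq3_zero[of "\<lambda>m. Z$0$m"] that by blast
  show ?thesis
  proof (rule mk_inH[OF r])
    show "(\<Sum>m\<in>S3. Z$m$i*Z$m$j) = (if i = j then 1 else 0)" if "i \<noteq> 0" "j \<noteq> 0" for i j
      using qa[of i j] r[OF that(1)] that by (simp add: Ik_entry)
    show "(\<Sum>m\<in>S3. Z$m$0*Z$m$j) = 0" if "j \<noteq> 0" for j
      using qa[of 0 j] r[OF that] that by (simp add: Ik_entry)
    show "det Z^2 = 1" using assms(1) by (rule kcong_det)
  qed auto
qed

lemma two_classes:
  assumes "kcong k1 Z" "kcong k2 Z" "k1 \<noteq> k2"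
  shows "inH Z"
  using assms two_classes_FF two_classes_FO
  by (cases k1; cases k2) auto

lemma kcong_mult:
  assumes "kcong k X" "kcong k Y"
  shows "kcong k (X ** Y)"
proof -
  have inv: "invertible (X ** Y)" using kcong_inv[OF assms(1)] kcong_inv[OF assms(2)] by (rule invertible_mult)
  have d: "det (X ** Y)^2 = 1" using kcong_det[OF assms(1)] kcong_det[OF assms(2)]
    by (simp add: det_mul power_mult_distrib)
  show ?thesis
  proof (cases k)
    case (Fin r)
    have "transpose (X ** Y) ** Ik r ** (X ** Y) = transpose Y ** (transpose X ** Ik r ** X) ** Y"
      by (simp add: matrix_transpose_mul matrix_mul_assoc)
    also have "\<dots> = Ik r" using assms Fin by (simp add: kcong_Fin)
    finally show ?thesis using Fin inv d by (simp add: kcong_Fin)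
  next
    case Omega
    have "(X ** Y) ** Ik 0 ** transpose (X ** Y) = X ** (Y ** Ik 0 ** transpose Y) ** transpose X"
      by (simp add: matrix_transpose_mul matrix_mul_assoc)
    also have "\<dots> = Ik 0" using assms Omega by (simp add: kcong_Omega)
    finally show ?thesis using Omega inv d by (simp add: kcong_Omega)
  qed
qed

lemma kcong_inverse:
  assumes "kcong k X"
  shows "kcong k (matrix_inv X)"
proof -
  define B where "B = matrix_inv X"
  have iX: "invertible X" using kcong_inv[OF assms] .
  have XB: "X ** B = mat 1" and BX: "B ** X = mat 1" using inv_facts[OF iX] by (auto simp: B_def)
  have inv: "invertible B" using inv_unique(2)[OF XB] .
  have "det B * det X = 1" using BX by (metis det_I det_mul)
  then have "(det B)^2 * (det X)^2 = 1" by (metis power_mult_distrib power_one)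
  then have d: "det B^2 = 1" using kcong_det[OF assms] by simp
  show ?thesis
  proof (cases k)
    case (Fin r)
    have "transpose B ** Ik r ** B = transpose B ** (transpose X ** Ik r ** X) ** B"
      using assms Fin by (simp add: kcong_Fin)
    also have "\<dots> = transpose (X ** B) ** Ik r ** (X ** B)"
      by (simp add: matrix_transpose_mul matrix_mul_assoc)
    also have "\<dots> = Ik r" using XB by simp
    finally show ?thesis using Fin inv d by (simp add: kcong_Fin B_def)
  next
    case Omega
    have "B ** Ik 0 ** transpose B = B ** (X ** Ik 0 ** transpose X) ** transpose B"
      using assms Omega by (simp add: kcong_Omega)
    also have "\<dots> = (B ** X) ** Ik 0 ** transpose (B ** X)"
      by (simp add: matrix_transpose_mul matrix_mul_assoc)
    also have "\<dots> = Ik 0" using BX by simp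
    finally show ?thesis using Omega inv d by (simp add: kcong_Omega B_def)
  qed
qed

lemma Ik1: "Ik 1 = mat 1"
  by (simp add: Ik_def mat_def vec_eq_iff)

lemma inH_inv: "inH Z \<Longrightarrow> matrix_inv Z = transpose Z"
  using inH_quad[of Z 1] by (simp add: Ik1 inv_unique)

lemma inv_inv: "invertible (Y::mat4) \<Longrightarrow> matrix_inv (matrix_inv Y) = Y"
  using inv_facts inv_unique by metis

lemma inH_of_inv: "invertible Y \<Longrightarrow> inH (matrix_inv Y) \<Longrightarrow> inH Y"
  using inH_inv inv_inv inH_transpose by metis

definition star :: "S1 \<Rightarrow> S1" where
  "star k = (case k of Fin r \<Rightarrow> if r = 0 then Omega else Fin (1/r) | Omega \<Rightarrow> Fin 0)"

lemma Ik_inv: "r \<noteq> 0 \<Longrightarrow> Ik r ** Ik (1/r) = mat 1"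
  using ex4 by (simp add: vec_eq_iff mat_def mult_entry Ik_entry sumS) blast

lemma kcong_Fin_transpose:
  assumes "r \<noteq> 0" "kcong (Fin r) Z"
  shows "kcong (Fin (1/r)) (transpose Z)"
proof -
  have M: "transpose Z ** Ik r ** Z = Ik r" using assms(2) by (simp add: kcong_Fin)
  have "(transpose Z ** Ik r) ** (Z ** Ik (1/r)) = (transpose Z ** Ik r ** Z) ** Ik (1/r)"
    by (simp add: matrix_mul_assoc)
  also have "\<dots> = mat 1" using M Ik_inv[OF assms(1)] by simp
  finally have "(Z ** Ik (1/r)) ** (transpose Z ** Ik r) = mat 1"
    using matrix_left_right_inverse by blast
  then have "((Z ** Ik (1/r)) ** (transpose Z ** Ik r)) ** Ik (1/r) = Ik (1/r)" by simp
  then have "Z ** Ik (1/r) ** transpose Z ** (Ik r ** Ik (1/r)) = Ik (1/r)"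
    by (simp add: matrix_mul_assoc)
  then have "Z ** Ik (1/r) ** transpose Z = Ik (1/r)" using Ik_inv[OF assms(1)] by simp
  then show ?thesis using assms(2) by (simp add: kcong_Fin invertible_transpose_iff)
qed

lemma star_kcong: "kcong k Z \<longleftrightarrow> kcong (star k) (transpose Z)"
proof (cases k)
  case (Fin r)
  show ?thesis
  proof (cases "r = 0")
    case True
    then show ?thesis using Fin by (simp add: star_def kcong_Fin kcong_Omega invertible_transpose_iff)
  next
    case False
    have "kcong (Fin (1/r)) (transpose Z) \<Longrightarrow> kcong (Fin r) Z"
      using kcong_Fin_transpose[of "1/r" "transpose Z"] False by simp
    then show ?thesis using Fin False kcong_Fin_transpose[of r Z] by (auto simp: star_def)
  qed
next
  case Omega
  then show ?thesis by (simp add: star_def kcong_Fin kcong_Omega invertible_transpose_iff)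
qed

lemma star_inj: "star a = star b \<Longrightarrow> a = b"
  by (cases a; cases b) (auto simp: star_def split: if_splits)

definition DH :: "mat4 \<Rightarrow> mat4 \<Rightarrow> bool" where
  "DH X Y \<longleftrightarrow> inH X \<or> inH Y \<or> inH (X ** Y)"

definition PP :: "S1 \<Rightarrow> S1 \<Rightarrow> S1 \<Rightarrow> bool" where
  "PP a b c \<longleftrightarrow> (\<forall>X Y. kcong a X \<longrightarrow> kcong b Y \<longrightarrow> kcong c (X ** Y) \<longrightarrow> DH X Y)"

lemma sigma1: "PP a b c \<Longrightarrow> PP c b a"
  unfolding PP_def
proof (intro allI impI)
  fix X Y
  assume P: "\<forall>X Y. kcong a X \<longrightarrow> kcong b Y \<longrightarrow> kcong c (X ** Y) \<longrightarrow> DH X Y"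
    and X: "kcong c X" and Y: "kcong b Y" and XY: "kcong a (X ** Y)"
  have iY: "invertible Y" using kcong_inv[OF Y] .
  have e: "(X ** Y) ** matrix_inv Y = X"
    by (metis inv_facts(1)[OF iY] matrix_mul_assoc matrix_mul_rid)
  have "DH (X ** Y) (matrix_inv Y)"
    using P XY kcong_inverse[OF Y] X e by metis
  then show "DH X Y" unfolding DH_def using e inH_of_inv[OF iY] by auto
qed

lemma tau: "PP (star b) (star a) (star c) \<Longrightarrow> PP a b c"
  unfolding PP_def
proof (intro allI impI)
  fix X Y
  assume P: "\<forall>X Y. kcong (star b) X \<longrightarrow> kcong (star a) Y \<longrightarrow> kcong (star c) (X ** Y) \<longrightarrow> DH X Y"
    and X: "kcong a X" and Y: "kcong b Y" and XY: "kcong c (X ** Y)"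
  have "DH (transpose Y) (transpose X)"
    using P X Y XY star_kcong by (metis matrix_transpose_mul)
  then show "DH X Y" unfolding DH_def
    by (metis inH_transpose matrix_transpose_mul transpose_transpose)
qed

definition RR :: "real^4 \<Rightarrow> mat4" where "RR u = (\<chi> i j. u$i * u$j)"

lemma quad_shift: "transpose Z ** Ik k ** Z = transpose Z ** Ik k' ** Z + (k - k') *\<^sub>R RR (Z$0)"
  by (simp add: vec_eq_iff quad_entry RR_def algebra_simps)

lemma congr_lin: "transpose (Y::mat4) ** (N1 + k *\<^sub>R N2) ** Y = transpose Y ** N1 ** Y + k *\<^sub>R (transpose Y ** N2 ** Y)"
  by (simp add: vec_eq_iff matrix_matrix_mult_def transpose_def sum4 algebra_simps)

lemma congr_RR: "transpose (Y::mat4) ** RR u ** Y = RR (u v* Y)"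
  by (simp add: vec_eq_iff matrix_matrix_mult_def vector_matrix_mult_def transpose_def RR_def sum4 algebra_simps)

lemma row_mult: "((X::mat4) ** Y)$0 = X$0 v* Y"
  by (simp add: vec_eq_iff matrix_matrix_mult_def vector_matrix_mult_def)

lemma rank_arg:
  fixes y s :: "4 \<Rightarrow> real"
  assumes E: "\<And>i j. Ik c$i$j = Ik b$i$j + (a-b)*(y i* y j) + (c-a)*(s i* s j)"
    and ab: "a \<noteq> b" and bc: "b \<noteq> c" and ac: "a \<noteq> c" and i: "i \<noteq> 0"
  shows "y i = 0"
proof (rule ccontr)
  assume yi: "y i \<noteq> 0"
  have Eij: "(a-b)*(y i* y j) + (c-a)*(s i* s j) = 0" for j
    using E[of i j] i by (simp add: Ik_entry split: if_splits)
  have si: "s i \<noteq> 0"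
  proof
    assume "s i = 0"
    then have "(a-b)*(y i* y i) = 0" using Eij[of i] by simp
    then show False using ab yi by simp
  qed
  have ca: "c - a \<noteq> 0" using ac by simp
  define l where "l = -(a-b)* y i/((c-a)* s i)"
  have sj: "s j = l * y j" for j
  proof -
    have "(c-a)* s i* s j = -(a-b)* y i* y j" using Eij[of j] by (simp add: algebra_simps)
    then show ?thesis using ca si unfolding l_def by (simp add: field_simps)
  qed
  have "((a-b) + (c-a)*l^2) * (y i * y i) = 0"
    using Eij[of i] sj[of i] by (simp add: algebra_simps power2_eq_square)
  then have z: "(a-b) + (c-a)*l^2 = 0" using yi by simp
  have "c = b + (a-b)*(y 0* y 0) + (c-a)*(s 0* s 0)" using E[of 0 0] by (simp add: Ik_entry)
  also have "\<dots> = b + ((a-b) + (c-a)*l^2)*(y 0* y 0)" using sj[of 0] by (simp add: algebra_simps power2_eq_square)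
  also have "\<dots> = b" using z by simp
  finally show False using bc by simp
qed

lemma T_fin:
  assumes "a \<noteq> b" "b \<noteq> c" "a \<noteq> c"
  shows "PP (Fin a) (Fin b) (Fin c)"
  unfolding PP_def
proof (intro allI impI)
  fix X Y
  assume X: "kcong (Fin a) X" and Y: "kcong (Fin b) Y" and XY: "kcong (Fin c) (X ** Y)"
  have MX: "transpose X ** Ik c ** X = Ik a + (c - a) *\<^sub>R RR (X$0)"
    using quad_shift[of X c a] X by (simp add: kcong_Fin)
  have MY: "transpose Y ** Ik a ** Y = Ik b + (a - b) *\<^sub>R RR (Y$0)"
    using quad_shift[of Y a b] Y by (simp add: kcong_Fin)
  have "Ik c = transpose (X ** Y) ** Ik c ** (X ** Y)" using XY by (simp add: kcong_Fin)
  also have "\<dots> = transpose Y ** (transpose X ** Ik c ** X) ** Y"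
    by (simp add: matrix_transpose_mul matrix_mul_assoc)
  also have "\<dots> = Ik b + (a - b) *\<^sub>R RR (Y$0) + (c - a) *\<^sub>R RR ((X ** Y)$0)"
    unfolding MX congr_lin congr_RR MY row_mult by simp
  finally have E: "Ik c = Ik b + (a - b) *\<^sub>R RR (Y$0) + (c - a) *\<^sub>R RR ((X ** Y)$0)" .
  have E2: "Ik c$i$j = Ik b$i$j + (a-b)*(Y$0$i*Y$0$j) + (c-a)*((X ** Y)$0$i*(X ** Y)$0$j)" for i j
    using arg_cong[OF E, of "\<lambda>M. M$i$j"] by (simp add: RR_def)
  have r: "Y$0$j = 0" if "j \<noteq> 0" for j
    using rank_arg[of c b a "\<lambda>i. Y$0$i" "\<lambda>i. (X ** Y)$0$i", OF E2 assms that] .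
  have qb: "b*Y$0$i*Y$0$j + (\<Sum>m\<in>S3. Y$m$i*Y$m$j) = Ik b $i$j" for i j
    using Y unfolding kcong_Fin quad_entry[symmetric] by simp
  have "inH Y"
  proof (rule mk_inH[OF r])
    show "(\<Sum>m\<in>S3. Y$m$i*Y$m$j) = (if i = j then 1 else 0)" if "i \<noteq> 0" "j \<noteq> 0" for i j
      using qb[of i j] r[OF that(1)] that by (simp add: Ik_entry)
    show "(\<Sum>m\<in>S3. Y$m$0*Y$m$j) = 0" if "j \<noteq> 0" for j
      using qb[of 0 j] r[OF that] that by (simp add: Ik_entry)
    show "det Y^2 = 1" using Y by (rule kcong_det)
  qed auto
  then show "DH X Y" by (simp add: DH_def)
qed

lemma T_0wk:
  assumes "k \<noteq> 0"
  shows "PP (Fin 0) Omega (Fin k)"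
  unfolding PP_def
proof (intro allI impI)
  fix X Y
  assume X: "kcong (Fin 0) X" and Y: "kcong Omega Y" and XY: "kcong (Fin k) (X ** Y)"
  have MX: "transpose X ** Ik k ** X = Ik 0 + (k - 0) *\<^sub>R RR (X$0)"
    using quad_shift[of X k 0] X by (simp add: kcong_Fin)
  have "Ik k = transpose (X ** Y) ** Ik k ** (X ** Y)" using XY by (simp add: kcong_Fin)
  also have "\<dots> = transpose Y ** (transpose X ** Ik k ** X) ** Y"
    by (simp add: matrix_transpose_mul matrix_mul_assoc)
  also have "\<dots> = transpose Y ** Ik 0 ** Y + (k - 0) *\<^sub>R RR ((X ** Y)$0)"
    unfolding MX congr_lin congr_RR row_mult by simp
  finally have E: "Ik k = transpose Y ** Ik 0 ** Y + (k - 0) *\<^sub>R RR ((X ** Y)$0)" .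
  have E2: "Ik k$i$j = (\<Sum>m\<in>S3. Y$m$i*Y$m$j) + k*((X ** Y)$0$i*(X ** Y)$0$j)" for i j
    using arg_cong[OF E, of "\<lambda>M. M$i$j"] by (simp add: RR_def quad_entry)
  have qo: "0*Y$i$0*Y$j$0 + (\<Sum>m\<in>S3. Y$i$m*Y$j$m) = Ik 0 $i$j" for i j
    using Y unfolding kcong_Omega quadT_entry[symmetric] by simp
  have "(\<Sum>m\<in>S3. Y$0$m*Y$0$m) = 0" using qo[of 0 0] by (simp add: Ik_entry)
  then have r: "Y$0$j = 0" if "j \<noteq> 0" for j using sum_sq3_zero[of "\<lambda>m. Y$0$m"] that by blast
  have ro: "(\<Sum>m\<in>S3. Y$i$m*Y$j$m) = (if i = j then 1 else 0)" if "i \<noteq> 0" "j \<noteq> 0" for i j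
    using qo[of i j] that by (simp add: Ik_entry)
  have co: "(\<Sum>m\<in>S3. Y$m$i*Y$m$j) = (if i = j then 1 else 0)" if "i \<noteq> 0" "j \<noteq> 0" for i j
    using transfer_rows_cols[OF ro that] .
  have s: "(X ** Y)$0$i = 0" if "i \<noteq> 0" for i
  proof -
    have "k*((X ** Y)$0$i*(X ** Y)$0$i) = 0" using E2[of i i] co[OF that that] that by (simp add: Ik_entry)
    then show ?thesis using assms by simp
  qed
  have "inH Y"
  proof (rule mk_inH[OF r co])
    show "(\<Sum>m\<in>S3. Y$m$0*Y$m$j) = 0" if "j \<noteq> 0" for j
      using E2[of 0 j] s[OF that] that by (simp add: Ik_entry)
    show "det Y^2 = 1" using Y by (rule kcong_det)
  qed auto
  then show "DH X Y" by (simp add: DH_def)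
qed

lemma star_Fin: "k \<noteq> 0 \<Longrightarrow> star (Fin k) = Fin (1/k)" "star (Fin 0) = Omega" "star Omega = Fin 0"
  by (simp_all add: star_def)

lemma L2: "k \<noteq> 0 \<Longrightarrow> PP (Fin k) Omega (Fin 0)"
  using sigma1[OF T_0wk] .

lemma L3: "k \<noteq> 0 \<Longrightarrow> PP (Fin 0) (Fin k) Omega"
  by (rule tau) (simp add: star_Fin L2)

lemma L4: "k \<noteq> 0 \<Longrightarrow> PP Omega (Fin k) (Fin 0)"
  using sigma1[OF L3] .

lemma L5: "k \<noteq> 0 \<Longrightarrow> PP (Fin k) (Fin 0) Omega"
  by (rule tau) (simp add: star_Fin L4)

lemma L6: "k \<noteq> 0 \<Longrightarrow> PP Omega (Fin 0) (Fin k)"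
  using sigma1[OF L5] .

lemma PP_all:
  assumes "a \<noteq> b" "b \<noteq> c" "a \<noteq> c"
  shows "PP a b c"
proof (cases a)
  case (Fin r)
  note a = this
  show ?thesis
  proof (cases b)
    case (Fin t)
    note b = this
    show ?thesis
    proof (cases c)
      case (Fin u)
      then show ?thesis using a b assms T_fin by simp
    next
      case Omega
      show ?thesis
      proof (cases "r = 0")
        case True then show ?thesis using a b Omega assms L3 by simp
      next
        case r: False
        show ?thesis
        proof (cases "t = 0")
          case True then show ?thesis using a b Omega assms L5 r by simp
        next
          case False
          show ?thesis
            by (rule tau) (use a b Omega assms r False in \<open>auto simp: star_Fin intro!: T_fin\<close>)
        qed
      qed
    qed
  next
    case Omega
    note b = this
    show ?thesis
    proof (cases c)
      case (Fin u)
      note c = this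
      show ?thesis
      proof (cases "r = 0")
        case True then show ?thesis using a b c assms T_0wk by simp
      next
        case r: False
        show ?thesis
        proof (cases "u = 0")
          case True then show ?thesis using a b c assms L2 r by simp
        next
          case False
          show ?thesis
            by (rule tau) (use a b c assms r False in \<open>auto simp: star_Fin intro!: T_fin\<close>)
        qed
      qed
    next
      case Omega then show ?thesis using b assms by simp
    qed
  qed
next
  case Omega
  note a = this
  show ?thesis
  proof (cases b)
    case (Fin t)
    note b = this
    show ?thesis
    proof (cases c)
      case (Fin u)
      note c = this
      show ?thesis
      proof (cases "t = 0")
        case True then show ?thesis using a b c assms L6 by simp
      next
        case t: False
        show ?thesis
        proof (cases "u = 0")
          case True then show ?thesis using a b c assms L4 t by simp
        next
          case False
          show ?thesis
            by (rule tau) (use a b c assms t False in \<open>auto simp: star_Fin intro!: T_fin\<close>)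
        qed
      qed
    next
      case Omega then show ?thesis using a assms by simp
    qed
  next
    case Omega then show ?thesis using a assms by simp
  qed
qed

lemma part3:
  assumes A1: "kcong k1 A1" and A2: "kcong k2 A2" and u: "\<forall>k. kcong k A1 \<longrightarrow> k = k1"
  shows "((\<exists>k. kcong k (A1 ** A2)) \<longrightarrow> kcong k1 (A1 ** A2)) \<and>
         ((\<exists>k. kcong k (A2 ** A1)) \<longrightarrow> kcong k1 (A2 ** A1))"
proof (intro conjI impI)
  have iA2: "invertible A2" using kcong_inv[OF A2] .
  assume "\<exists>k. kcong k (A1 ** A2)"
  then obtain k where k: "kcong k (A1 ** A2)" by blast
  show "kcong k1 (A1 ** A2)"
  proof (cases "k = k1 \<or> k2 = k1")
    case True
    then show ?thesis using k kcong_mult[OF A1] A2 by auto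
  next
    case False
    show ?thesis
    proof (cases "k = k2")
      case True
      have e: "(A1 ** A2) ** matrix_inv A2 = A1"
        by (metis inv_facts(1)[OF iA2] matrix_mul_assoc matrix_mul_rid)
      have "kcong k2 A1" using kcong_mult[OF _ kcong_inverse[OF A2], of "A1 ** A2"] k True e by simp
      then show ?thesis using u False by blast
    next
      case k2: False
      have "PP k1 k2 k" using PP_all False k2 by metis
      then have "DH A1 A2" using A1 A2 k unfolding PP_def by blast
      then show ?thesis unfolding DH_def using inH_all[of A1 k2] inH_all[of A2 k1] inH_all[of "A1 ** A2" k1]
        u False kcong_mult[OF A1] by blast
    qed
  qed
next
  have iA2: "invertible A2" using kcong_inv[OF A2] .
  assume "\<exists>k. kcong k (A2 ** A1)"
  then obtain k where k: "kcong k (A2 ** A1)" by blast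
  show "kcong k1 (A2 ** A1)"
  proof (cases "k = k1 \<or> k2 = k1")
    case True
    then show ?thesis using k kcong_mult[OF _ A1] A2 by auto
  next
    case False
    show ?thesis
    proof (cases "k = k2")
      case True
      have e: "matrix_inv A2 ** (A2 ** A1) = A1"
        by (metis inv_facts(2)[OF iA2] matrix_mul_assoc matrix_mul_lid)
      have "kcong k2 A1" using kcong_mult[OF kcong_inverse[OF A2], of "A2 ** A1"] k True e by simp
      then show ?thesis using u False by blast
    next
      case k2: False
      have "PP k2 k1 k" using PP_all False k2 by metis
      then have "DH A2 A1" using A1 A2 k unfolding PP_def by blast
      then show ?thesis unfolding DH_def using inH_all[of A1 k2] inH_all[of A2 k1] inH_all[of "A2 ** A1" k1]
        u False kcong_mult[OF _ A1] by blast
    qed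
  qed
qed

lemma S3_ne: "m \<in> S3 \<Longrightarrow> m \<noteq> 0"
  by (simp add: S3_iff)

lemma condE_facts:
  fixes A :: mat4
  assumes inv: "invertible A" and E: "condE A"
  defines "B \<equiv> matrix_inv A"
  shows "\<And>i j. i \<noteq> 0 \<Longrightarrow> j \<noteq> 0 \<Longrightarrow> B$i$0 * A$0$j + (\<Sum>m\<in>S3. A$m$i*A$m$j) = (if i = j then 1 else 0)"
    and "\<And>i j. i \<noteq> 0 \<Longrightarrow> j \<noteq> 0 \<Longrightarrow> A$i$0 * B$0$j + (\<Sum>m\<in>S3. A$i$m*A$j$m) = (if i = j then 1 else 0)"
    and "A$0$0 * A$0$0 + (\<Sum>m\<in>S3. A$0$m * B$m$0) = 1"
    and "A$0$0 * A$0$0 + (\<Sum>m\<in>S3. B$0$m * A$m$0) = 1"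
    and "\<And>j. j \<noteq> 0 \<Longrightarrow> A$0$0 * B$0$j + (\<Sum>m\<in>S3. A$0$m*A$j$m) = 0"
    and "\<And>i. i \<noteq> 0 \<Longrightarrow> B$i$0 * A$0$0 + (\<Sum>m\<in>S3. A$m$i*A$m$0) = 0"
proof -
  have AB: "A ** B = mat 1" and BA: "B ** A = mat 1" using inv_facts[OF inv] by (auto simp: B_def)
  have e00: "B$0$0 = A$0$0" and eij: "\<And>i j. i \<noteq> 0 \<Longrightarrow> j \<noteq> 0 \<Longrightarrow> B$i$j = A$j$i"
    using E unfolding condE_def B_def by auto
  have ab: "(A ** B)$i$j = (if i = j then 1 else 0)" for i j using AB by (simp add: mat_def)
  have ba: "(B ** A)$i$j = (if i = j then 1 else 0)" for i j using BA by (simp add: mat_def)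
  show "B$i$0 * A$0$j + (\<Sum>m\<in>S3. A$m$i*A$m$j) = (if i = j then 1 else 0)" if "i \<noteq> 0" "j \<noteq> 0" for i j
  proof -
    have "(\<Sum>m\<in>S3. B$i$m*A$m$j) = (\<Sum>m\<in>S3. A$m$i*A$m$j)"
      by (rule sum.cong) (auto simp: eij that S3_ne)
    then show ?thesis using ba[of i j] by (simp add: mult_entry)
  qed
  show "A$i$0 * B$0$j + (\<Sum>m\<in>S3. A$i$m*A$j$m) = (if i = j then 1 else 0)" if "i \<noteq> 0" "j \<noteq> 0" for i j
  proof -
    have "(\<Sum>m\<in>S3. A$i$m*B$m$j) = (\<Sum>m\<in>S3. A$i$m*A$j$m)"
      by (rule sum.cong) (auto simp: eij that S3_ne)
    then show ?thesis using ab[of i j] by (simp add: mult_entry)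
  qed
  show "A$0$0 * A$0$0 + (\<Sum>m\<in>S3. A$0$m * B$m$0) = 1" using ab[of 0 0] e00 by (simp add: mult_entry)
  show "A$0$0 * A$0$0 + (\<Sum>m\<in>S3. B$0$m * A$m$0) = 1" using ba[of 0 0] e00 by (simp add: mult_entry)
  show "A$0$0 * B$0$j + (\<Sum>m\<in>S3. A$0$m*A$j$m) = 0" if "j \<noteq> 0" for j
  proof -
    have "(\<Sum>m\<in>S3. A$0$m*B$m$j) = (\<Sum>m\<in>S3. A$0$m*A$j$m)"
      by (rule sum.cong) (auto simp: eij that S3_ne)
    then show ?thesis using ab[of 0 j] that by (simp add: mult_entry)
  qed
  show "B$i$0 * A$0$0 + (\<Sum>m\<in>S3. A$m$i*A$m$0) = 0" if "i \<noteq> 0" for i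
  proof -
    have "(\<Sum>m\<in>S3. B$i$m*A$m$0) = (\<Sum>m\<in>S3. A$m$i*A$m$0)"
      by (rule sum.cong) (auto simp: eij that S3_ne)
    then show ?thesis using ba[of i 0] that e00 by (simp add: mult_entry)
  qed
qed

lemma gen_case:
  fixes A :: mat4
  assumes inv: "invertible A" and E: "condE A" and p: "p \<noteq> 0" "A$0$p \<noteq> 0"
  defines "k \<equiv> matrix_inv A $ p $ 0 / A$0$p"
  shows "\<And>i. i \<noteq> 0 \<Longrightarrow> matrix_inv A $ i $ 0 = k * A$0$i"
    and "\<And>i j. i \<noteq> 0 \<or> j \<noteq> 0 \<Longrightarrow> (transpose A ** Ik k ** A)$i$j = Ik k $i$j"
proof -
  define B where "B = matrix_inv A"
  have kB: "k = B$p$0 / A$0$p" by (simp add: k_def B_def)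
  note F = condE_facts[OF inv E, folded B_def]
  have w: "B$i$0 = k * A$0$i" if i: "i \<noteq> 0" for i
  proof -
    have s: "(\<Sum>m\<in>S3. A$m$i*A$m$p) = (\<Sum>m\<in>S3. A$m$p*A$m$i)" by (simp add: mult.commute)
    have e1: "B$i$0 * A$0$p + (\<Sum>m\<in>S3. A$m$i*A$m$p) = (if i = p then 1 else 0)" using F(1)[OF i p(1)] .
    have e2: "B$p$0 * A$0$i + (\<Sum>m\<in>S3. A$m$p*A$m$i) = (if p = i then 1 else 0)" using F(1)[OF p(1) i] .
    have "(if i = p then 1 else 0) = (if p = i then 1 else (0::real))" by auto
    then have "B$i$0 * A$0$p = B$p$0 * A$0$i" using e1 e2 s by linarith
    then have "B$i$0 = B$p$0 * A$0$i / A$0$p" using p(2) by (simp add: eq_divide_eq)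
    then show ?thesis by (simp add: kB)
  qed
  then show "\<And>i. i \<noteq> 0 \<Longrightarrow> matrix_inv A $ i $ 0 = k * A$0$i" by (simp add: B_def)
  show "(transpose A ** Ik k ** A)$i$j = Ik k $i$j" if "i \<noteq> 0 \<or> j \<noteq> 0" for i j
  proof (cases "i = 0")
    case True
    then have j: "j \<noteq> 0" using that by simp
    have s: "(\<Sum>m\<in>S3. A$m$0*A$m$j) = (\<Sum>m\<in>S3. A$m$j*A$m$0)" by (simp add: mult.commute)
    have "k * A$0$j * A$0$0 + (\<Sum>m\<in>S3. A$m$j*A$m$0) = 0" using F(6)[OF j] unfolding w[OF j] .
    then have "k * A$0$0 * A$0$j + (\<Sum>m\<in>S3. A$m$0*A$m$j) = 0" unfolding s by (simp add: ac_simps)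
    then show ?thesis using True j by (simp add: quad_entry Ik_entry)
  next
    case i: False
    show ?thesis
    proof (cases "j = 0")
      case True
      have "k * A$0$i * A$0$0 + (\<Sum>m\<in>S3. A$m$i*A$m$0) = 0" using F(6)[OF i] unfolding w[OF i] .
      then show ?thesis using True i by (simp add: quad_entry Ik_entry)
    next
      case j: False
      have "k * A$0$i * A$0$j + (\<Sum>m\<in>S3. A$m$i*A$m$j) = (if i = j then 1 else 0)"
        using F(1)[OF i j] unfolding w[OF i] .
      then show ?thesis using i j by (simp add: quad_entry Ik_entry)
    qed
  qed
qed

lemma det_trick:
  fixes A :: mat4
  assumes off: "\<And>i j. i \<noteq> 0 \<or> j \<noteq> 0 \<Longrightarrow> (transpose A ** Ik k ** A)$i$j = Ik k $i$j"
    and d: "det A^2 = 1"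
  shows "transpose A ** Ik k ** A = Ik k"
proof -
  define M where "M = transpose A ** Ik k ** A"
  have off': "\<And>i j. i \<noteq> 0 \<or> j \<noteq> 0 \<Longrightarrow> M$i$j = Ik k $i$j" using off by (simp add: M_def)
  have "det M = prod (\<lambda>i. M$i$i) UNIV"
  proof (rule det_diagonal)
    fix i j :: 4 assume "i \<noteq> j"
    then have "i \<noteq> 0 \<or> j \<noteq> 0" by auto
    then show "M$i$j = 0" using off' \<open>i \<noteq> j\<close> by (simp add: Ik_entry)
  qed
  also have "\<dots> = M$0$0" using off'[of 1 1] off'[of 2 2] off'[of 3 3] by (simp add: prod4 Ik_entry)
  finally have "det M = M$0$0" .
  moreover have "det M = k" unfolding M_def det_mul det_transpose det_Ik using d
    by (simp add: power2_eq_square algebra_simps)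
  ultimately have "M$0$0 = Ik k $0$0" by (simp add: Ik_entry)
  then have "M$i$j = Ik k$i$j" for i j using off'[of i j] by (cases "i = 0 \<and> j = 0") auto
  then show ?thesis by (simp add: vec_eq_iff M_def)
qed

lemma part2_exists:
  fixes A :: mat4
  assumes inv: "invertible A" and E: "condE A" and d: "det A^2 = 1"
  shows "\<exists>k. kcong k A"
proof (cases "\<forall>j. j \<noteq> 0 \<longrightarrow> A$0$j = 0")
  case True
  define B where "B = matrix_inv A"
  note F = condE_facts[OF inv E, folded B_def]
  have h: "A$0$j = 0" if "j \<noteq> 0" for j using True that by blast
  have a2: "A$0$0 * A$0$0 = 1" using F(3) h[of 1] h[of 2] h[of 3] by (simp add: sumS)
  have g: "B$0$j = 0" if "j \<noteq> 0" for j
  proof -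
    have "A$0$0 * B$0$j = 0" using F(5)[OF that] sum_row0_zero(1)[OF h] by simp
    then show ?thesis using a2 by auto
  qed
  have "(A ** Ik 0 ** transpose A)$i$j = Ik 0 $i$j" for i j
  proof (cases "i = 0")
    case True then show ?thesis using sum_row0_zero(1)[OF h] by (simp add: quadT_entry Ik_entry)
  next
    case i: False
    show ?thesis
    proof (cases "j = 0")
      case True then show ?thesis using sum_row0_zero(2)[OF h] i by (simp add: quadT_entry Ik_entry)
    next
      case False then show ?thesis using F(2)[OF i False] g[OF False] i by (simp add: quadT_entry Ik_entry)
    qed
  qed
  then have "A ** Ik 0 ** transpose A = Ik 0" by (simp add: vec_eq_iff)
  then have "kcong Omega A" using inv d by (simp add: kcong_Omega)
  then show ?thesis by blast
next
  case False
  then obtain p where p: "p \<noteq> 0" "A$0$p \<noteq> 0" by blast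
  define k where "k = matrix_inv A $ p $ 0 / A$0$p"
  have "transpose A ** Ik k ** A = Ik k"
    using det_trick[OF gen_case(2)[OF inv E p, folded k_def] d] .
  then have "kcong (Fin k) A" using inv d by (simp add: kcong_Fin)
  then show ?thesis by blast
qed

lemma part2:
  fixes A :: mat4
  assumes inv: "invertible A" and E: "condE A" and d: "det A^2 = 1"
  shows "(\<exists>k. kcong k A) \<and> ((\<exists>!k. kcong k A) \<or> (\<forall>k. kcong k A))"
proof -
  obtain k0 where k0: "kcong k0 A" using part2_exists[OF assms] by blast
  show ?thesis
  proof (cases "\<forall>k. kcong k A \<longrightarrow> k = k0")
    case True then show ?thesis using k0 by blast
  next
    case False
    then obtain k1 where "kcong k1 A" "k1 \<noteq> k0" by blast
    then have "inH A" using two_classes k0 by blast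
    then show ?thesis using inH_all by blast
  qed
qed

lemma part1:
  fixes A :: mat4
  assumes inv: "invertible A" and E: "condE A" and E2: "condE (A ** A)"
  shows "det A^2 = 1"
proof -
  define B where "B = matrix_inv A"
  note F = condE_facts[OF inv E, folded B_def]
  have AB: "A ** B = mat 1" and BA: "B ** A = mat 1" using inv_facts[OF inv] by (auto simp: B_def)
  have "(B ** B) ** (A ** A) = mat 1"
    by (metis BA matrix_mul_assoc matrix_mul_lid)
  then have iAA: "matrix_inv (A ** A) = B ** B" by (rule inv_unique)
  have eij: "\<And>i j. i \<noteq> 0 \<Longrightarrow> j \<noteq> 0 \<Longrightarrow> B$i$j = A$j$i"
    using E unfolding condE_def B_def by auto
  have G: "B$i$0 * B$0$j = A$j$0 * A$0$i" if i: "i \<noteq> 0" and j: "j \<noteq> 0" for i j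
  proof -
    have "(B ** B)$i$j = (A ** A)$j$i" using E2 i j unfolding condE_def iAA by blast
    moreover have "(\<Sum>m\<in>S3. B$i$m*B$m$j) = (\<Sum>m\<in>S3. A$j$m*A$m$i)"
      by (rule sum.cong) (auto simp: eij i j S3_ne mult.commute)
    ultimately show ?thesis by (simp add: mult_entry)
  qed
  show ?thesis
  proof (cases "\<forall>j. j \<noteq> 0 \<longrightarrow> A$0$j = 0")
    case True
    have h: "A$0$j = 0" if "j \<noteq> 0" for j using True that by blast
    have a2: "A$0$0 * A$0$0 = 1" using F(3) h[of 1] h[of 2] h[of 3] by (simp add: sumS)
    have g: "B$0$j = 0" if "j \<noteq> 0" for j
    proof -
      have "A$0$0 * B$0$j = 0" using F(5)[OF that] sum_row0_zero(1)[OF h] by simp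
      then show ?thesis using a2 by auto
    qed
    have "minor A ** transpose (minor A) = mat 1"
      by (rule minor_rows) (use F(2) g in auto)
    then have dm: "det (minor A)^2 = 1" by (rule det_minor_sq)
    have dA: "det A = A$0$0 * det (minor A)" using h by (simp add: det_row0)
    have "det A^2 = (A$0$0*A$0$0) * det (minor A)^2" unfolding dA by (simp add: power2_eq_square mult_ac)
    then show ?thesis using a2 dm by simp
  next
    case False
    then obtain p where p: "p \<noteq> 0" "A$0$p \<noteq> 0" by blast
    define k where "k = matrix_inv A $ p $ 0 / A$0$p"
    note GC = gen_case[OF inv E p, folded k_def B_def]
    have v: "A$j$0 = k * B$0$j" if j: "j \<noteq> 0" for j
    proof -
      have "B$p$0 * B$0$j = A$j$0 * A$0$p" using G[OF p(1) j] .
      then have "k * A$0$p * B$0$j = A$j$0 * A$0$p" using GC(1)[OF p(1)] by simp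
      then show ?thesis using p(2) by (simp add: algebra_simps)
    qed
    have s: "(\<Sum>m\<in>S3. A$m$0*A$m$0) = k * (\<Sum>m\<in>S3. B$0$m*A$m$0)"
      unfolding sum_distrib_left by (rule sum.cong) (auto simp: v S3_ne mult_ac)
    have "(transpose A ** Ik k ** A)$i$j = Ik k $i$j" for i j
    proof (cases "i = 0 \<and> j = 0")
      case True
      have "k * A$0$0 * A$0$0 + (\<Sum>m\<in>S3. A$m$0*A$m$0) = k * (A$0$0 * A$0$0 + (\<Sum>m\<in>S3. B$0$m * A$m$0))"
        unfolding s by (simp add: distrib_left mult_ac)
      then have "k * A$0$0 * A$0$0 + (\<Sum>m\<in>S3. A$m$0*A$m$0) = k" using F(4) by simp
      then show ?thesis using True by (simp add: quad_entry Ik_entry)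
    next
      case False then show ?thesis using GC(2) by blast
    qed
    then have M: "transpose A ** Ik k ** A = Ik k" by (simp add: vec_eq_iff)
    show ?thesis
    proof (cases "k = 0")
      case False
      have "det A * k * det A = k" using arg_cong[OF M, of det] by (simp add: det_mul det_Ik)
      then show ?thesis using False by (simp add: power2_eq_square algebra_simps)
    next
      case True
      have w: "B$i$0 = 0" if "i \<noteq> 0" for i using GC(1)[OF that] True by simp
      have v0: "A$j$0 = 0" if "j \<noteq> 0" for j using v[OF that] True by simp
      have a2: "A$0$0 * A$0$0 = 1" using F(3) w[of 1] w[of 2] w[of 3] by (simp add: sumS)
      have "transpose (minor A) ** minor A = mat 1"
        by (rule minor_cols) (use F(1) w in auto)
      then have "minor A ** transpose (minor A) = mat 1" using matrix_left_right_inverse by blast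
      then have dm: "det (minor A)^2 = 1" by (rule det_minor_sq)
      have dA: "det A = A$0$0 * det (minor A)" using v0 by (simp add: det_col0)
      have "det A^2 = (A$0$0*A$0$0) * det (minor A)^2" unfolding dA by (simp add: power2_eq_square mult_ac)
      then show ?thesis using a2 dm by simp
    qed
  qed
qed

theorem lemma2p3:
  shows "(\<forall>A::mat4. invertible A \<and> condE A \<and> condE (A ** A) \<longrightarrow> (det A)^2 = 1)
    \<and> (\<forall>A::mat4. invertible A \<and> condE A \<and> (det A)^2 = 1 \<longrightarrow>
          (\<exists>k. kcong k A) \<and> ((\<exists>!k. kcong k A) \<or> (\<forall>k. kcong k A)))
    \<and> (\<forall>(A1::mat4) (A2::mat4) k1 k2. invertible A1 \<and> invertible A2 \<and>
          kcong k1 A1 \<and> kcong k2 A2 \<and> (\<forall>k. kcong k A1 \<longrightarrow> k = k1) \<longrightarrow>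
          ((\<exists>k. kcong k (A1 ** A2)) \<longrightarrow> kcong k1 (A1 ** A2)) \<and>
          ((\<exists>k. kcong k (A2 ** A1)) \<longrightarrow> kcong k1 (A2 ** A1)))"
  using part1 part2 part3 by blast

end
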